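(* Let $f:\mathbb{R}^n\to\mathbb{R}$ be differentiable and pseudo-convex, with $\nabla f$ $L$-Lipschitz continuous ($L>0$), and assume the stationary set $X^*$ is non-empty. Let $0<h<\frac{1}{L}$, $\beta\in\left(\frac{1-\sqrt{1-h^2L^2}}{h^2L^2},1\right]$ and $\kappa_1=2\beta-1-\beta^2h^2L^2$. Then the sequence $\{x^k\}$ generated by Algorithm 1 satisfies, for every $x^*\in X^*$ and every integer $K\ge1$, $$\frac{1}{K}\sum_{k=0}^{K-1}\|\nabla f(x^k)\|^2\le \frac{\|x^0-x^*\|^2}{K\kappa_1h^2}.$$
   Context: A differentiable $f$ is pseudo-convex if $\nabla f$ is pseudo-monotone, i.e. for all $x,y$, $\langle \nabla f(x),y-x\rangle\ge 0$ implies $\langle \nabla f(y),y-x\rangle\ge0$. The stationary set is $X^*=\{x\in\mathbb{R}^n:\nabla f(x)=0\}$. Algorithm 1: given $x^0$, for $k=0,1,2,\dots$ set $z^k=x^k-h\nabla f(x^k)$ and $x^{k+1}=x^k-h\big(\nabla f(x^k)-\beta(\nabla f(x^k)-\nabla f(z^k))\big)$. *)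

theory Defs
  imports "HOL-Analysis.Analysis"
begin

definition pseudo_monotone :: "('a::real_inner \<Rightarrow> 'a) \<Rightarrow> bool" where
  "pseudo_monotone F \<longleftrightarrow>
     (\<forall>x y. F x \<bullet> (y - x) \<ge> 0 \<longrightarrow> F y \<bullet> (y - x) \<ge> 0)"

text \<open>A differentiable f with gradient G is pseudo-convex iff G is pseudo-monotone.\<close>
definition pseudo_convex_grad :: "('a::real_inner \<Rightarrow> real) \<Rightarrow> ('a \<Rightarrow> 'a) \<Rightarrow> bool" where
  "pseudo_convex_grad f G \<longleftrightarrow>
     (\<forall>x. (f has_derivative (\<lambda>v. G x \<bullet> v)) (at x)) \<and> pseudo_monotone G"

definition stationary_set :: "('a::real_inner \<Rightarrow> 'a) \<Rightarrow> 'a set" where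
  "stationary_set G = {x. G x = 0}"

fun alg1 :: "('a::real_inner \<Rightarrow> 'a) \<Rightarrow> real \<Rightarrow> real \<Rightarrow> 'a \<Rightarrow> nat \<Rightarrow> 'a" where
  "alg1 G h \<beta> x0 0 = x0"
| "alg1 G h \<beta> x0 (Suc k) =
     (let x = alg1 G h \<beta> x0 k; z = x - h *\<^sub>R G x
      in x - h *\<^sub>R (G x - \<beta> *\<^sub>R (G x - G z)))"

end

theory Submission imports Defs begin

lemma step:
  fixes G :: "'a::real_inner \<Rightarrow> 'a" and x xs :: 'a
  assumes pm: "pseudo_monotone G" and Gxs: "G xs = 0"
    and lip: "\<And>x y. norm (G x - G y) \<le> L * norm (x - y)"
    and hpos: "h > 0" and b0: "\<beta> \<ge> 0" and b1: "\<beta> \<le> 1" and L0: "L > 0"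
  shows "(norm (x - h *\<^sub>R (G x - \<beta> *\<^sub>R (G x - G (x - h *\<^sub>R G x))) - xs))^2
     \<le> (norm (x - xs))^2 - (2*\<beta>-1-\<beta>^2*h^2*L^2)*h^2*(norm (G x))^2"
proof -
  define g where "g = G x"
  define z where "z = x - h *\<^sub>R g"
  define e where "e = g - G z"
  define u where "u = x - xs"
  define a where "a = g \<bullet> u"
  define b where "b = e \<bullet> u"
  define c where "c = g \<bullet> g"
  define p where "p = e \<bullet> g"
  define q where "q = e \<bullet> e"
  define n where "n = u \<bullet> u"
  have A: "a \<ge> 0" using pm Gxs unfolding pseudo_monotone_def a_def g_def u_def
    by (metis inner_zero_left order_refl)
  have B0: "G z \<bullet> (z - xs) \<ge> 0" using pm Gxs unfolding pseudo_monotone_def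
    by (metis inner_zero_left order_refl)
  have "G z = g - e" by (simp add: e_def)
  moreover have "z - xs = u - h *\<^sub>R g" by (simp add: z_def u_def)
  ultimately have "(g - e) \<bullet> (u - h *\<^sub>R g) \<ge> 0" using B0 by simp
  then have B: "a - b - h*c + h*p \<ge> 0"
    by (simp add: a_def b_def c_def p_def inner_diff_left inner_diff_right inner_commute algebra_simps)
  have ne: "norm e \<le> L * h * norm g"
    using lip[of x z] using hpos by (simp add: e_def g_def z_def mult.assoc)
  have "q = (norm e)^2" by (simp add: q_def power2_norm_eq_inner)
  also have "\<dots> \<le> (L*h*norm g)^2" using ne by (simp add: power_mono)
  also have "\<dots> = L^2*h^2*c" by (simp add: c_def power2_norm_eq_inner power_mult_distrib)
  finally have Q: "q \<le> L^2*h^2*c" .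
  have lhs: "(norm (x - h *\<^sub>R (G x - \<beta> *\<^sub>R (G x - G (x - h *\<^sub>R G x))) - xs))^2
     = n - 2*h*(a - \<beta>*b) + h^2*(c - 2*\<beta>*p + \<beta>^2*q)"
  proof -
    have "x - h *\<^sub>R (G x - \<beta> *\<^sub>R (G x - G (x - h *\<^sub>R G x))) - xs = u - h *\<^sub>R (g - \<beta> *\<^sub>R e)"
      by (simp add: u_def g_def e_def z_def algebra_simps)
    moreover have "((norm (u - h *\<^sub>R (g - \<beta> *\<^sub>R e)))^2 = n - 2*h*(a - \<beta>*b) + h^2*(c - 2*\<beta>*p + \<beta>^2*q))"
      unfolding power2_norm_eq_inner by (simp add: inner_diff_left inner_diff_right inner_commute
          a_def b_def c_def p_def q_def n_def algebra_simps power2_eq_square)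
    ultimately show ?thesis by simp
  qed
  have rhs: "(norm (x - xs))^2 = n" "(norm (G x))^2 = c"
    by (simp_all add: power2_norm_eq_inner n_def u_def c_def g_def)
  have f1: "2*h*\<beta>*(a - b - h*c + h*p) \<ge> 0" using B hpos b0 by simp
  have f2: "2*h*(1-\<beta>)*a \<ge> 0" using A hpos b1 by simp
  have f3: "h^2*\<beta>^2*(q - L^2*h^2*c) \<le> 0" using Q
    by (simp add: mult_nonneg_nonpos)
  show ?thesis unfolding lhs rhs using f1 f2 f3
    by (simp add: algebra_simps power2_eq_square) 
qed

lemma kappa_pos:
  fixes L h \<beta> :: real
  assumes Lpos: "L > 0" and hpos: "0 < h" and hL: "h < 1 / L"
    and blo: "(1 - sqrt (1 - h^2 * L^2)) / (h^2 * L^2) < \<beta>" and bhi: "\<beta> \<le> 1"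
  shows "2 * \<beta> - 1 - \<beta>^2 * h^2 * L^2 > 0"
proof -
  define a where "a = h^2 * L^2"
  have a0: "a > 0" using Lpos hpos by (simp add: a_def)
  have "h * L < 1" using hL Lpos by (simp add: field_simps)
  then have "(h*L)^2 < 1^2" using Lpos hpos by (intro power_strict_mono) auto
  then have a1: "a < 1" by (simp add: a_def power_mult_distrib)
  define s where "s = sqrt (1 - a)"
  have s0: "s \<ge> 0" and ss: "s^2 = 1 - a" using a1 by (auto simp: s_def)
  have "(1 - s) / a < \<beta>" using blo by (simp add: a_def s_def)
  then have "1 - s < a * \<beta>" using a0 by (simp add: pos_divide_less_eq mult.commute)
  moreover have "a * \<beta> < 1 + s" using bhi a1 a0 s0
    by (smt (verit) mult_left_le)
  ultimately have "(a*\<beta> - 1)^2 < s^2"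
    by (smt (verit) abs_le_square_iff abs_less_iff power2_less_imp_less real_sqrt_abs real_sqrt_less_iff s0)
  then have "a * (a*\<beta>^2 - 2*\<beta> + 1) < 0" using ss by (simp add: power2_eq_square algebra_simps)
  then have "a*\<beta>^2 - 2*\<beta> + 1 < 0" using a0 by (simp add: mult_less_0_iff)
  then show ?thesis by (simp add: a_def algebra_simps)
qed

theorem theorem2:
  fixes f :: "real ^ 'n \<Rightarrow> real" and G :: "real ^ 'n \<Rightarrow> real ^ 'n"
    and L h \<beta> :: real and x0 xs :: "real ^ 'n" and K :: nat
  assumes pc: "pseudo_convex_grad f G"
    and Lpos: "L > 0"
    and lip: "\<And>x y. norm (G x - G y) \<le> L * norm (x - y)"
    and nonempty: "stationary_set G \<noteq> {}"
    and hpos: "0 < h" and hL: "h < 1 / L"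
    and \<beta>lo: "(1 - sqrt (1 - h^2 * L^2)) / (h^2 * L^2) < \<beta>" and \<beta>hi: "\<beta> \<le> 1"
    and xs: "xs \<in> stationary_set G"
    and K: "K \<ge> 1"
  shows "(1 / real K) * (\<Sum>k<K. (norm (G (alg1 G h \<beta> x0 k)))^2)
           \<le> (norm (x0 - xs))^2 / (real K * (2 * \<beta> - 1 - \<beta>^2 * h^2 * L^2) * h^2)"
proof -
  define \<kappa> where "\<kappa> = 2 * \<beta> - 1 - \<beta>^2 * h^2 * L^2"
  have kp: "\<kappa> > 0" unfolding \<kappa>_def by (rule kappa_pos[OF Lpos hpos hL \<beta>lo \<beta>hi])
  have b0: "\<beta> \<ge> 0"
  proof (rule ccontr)
    assume "\<not> \<beta> \<ge> 0"
    then have "2*\<beta> - 1 < 0" by simp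
    moreover have "\<beta>^2 * h^2 * L^2 \<ge> 0" by simp
    ultimately show False using kp unfolding \<kappa>_def by linarith
  qed
  have pm: "pseudo_monotone G" using pc by (simp add: pseudo_convex_grad_def)
  have Gxs: "G xs = 0" using xs by (simp add: stationary_set_def)
  define X where "X = alg1 G h \<beta> x0"
  have st: "(norm (X (Suc k) - xs))^2 \<le> (norm (X k - xs))^2 - \<kappa>*h^2*(norm (G (X k)))^2" for k
    using step[OF pm Gxs lip hpos b0 \<beta>hi Lpos, of "X k"] unfolding \<kappa>_def X_def
    by (simp add: Let_def)
  have ind: "\<kappa>*h^2*(\<Sum>k<N. (norm (G (X k)))^2) \<le> (norm (x0 - xs))^2 - (norm (X N - xs))^2" for N
  proof (induction N)
    case 0 then show ?case by (simp add: X_def)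
  next
    case (Suc N) then show ?case using st[of N] by (simp add: algebra_simps)
  qed
  have S: "\<kappa>*h^2*(\<Sum>k<K. (norm (G (X k)))^2) \<le> (norm (x0 - xs))^2"
    using ind[of K] by (smt (verit) zero_le_power2)
  have Kp: "real K > 0" using K by simp
  have pos: "real K * \<kappa> * h^2 > 0" using Kp kp hpos by simp
  have "(1 / real K) * (\<Sum>k<K. (norm (G (X k)))^2) = (\<kappa>*h^2*(\<Sum>k<K. (norm (G (X k)))^2)) / (real K * \<kappa> * h^2)"
    using Kp kp hpos by (simp add: field_simps)
  also have "\<dots> \<le> (norm (x0 - xs))^2 / (real K * \<kappa> * h^2)"
    using S pos by (intro divide_right_mono) auto
  finally show ?thesis unfolding X_def \<kappa>_def .
qed

end
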